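(* Let $m\in\mathbb{N}$, $\varphi_k\in(0,\pi)$ and $c_k,d_k\geq0$ for $k=1,\dots,m$, and set $\alpha_k=e^{i\varphi_k}$. If $\cos\varphi_1,\dots,\cos\varphi_m$ are algebraically independent over $\mathbb{Q}$, then the Lévy measure $\sum_{k=1}^m(c_k\delta_{\alpha_k}+d_k\delta_{\bar\alpha_k})$ is L-unique.
   Context: A Lévy measure on $\mathbb{T}$ is a positive Borel measure $\rho$ with $\rho(\{1\})=0$ and $1-\Re s\in L^1(\rho)$. For a Lévy measure $\rho$, $\nu_\circledast^{(1,0,\rho)}$ is the probability measure on $\mathbb{T}$ with $\int s^n\,d\nu=\exp\big(\int_{\mathbb{T}}(s^n-1-in\Im s)\,d\rho(s)\big)$, $n\in\mathbb{Z}$. $\rho$ is L-unique if the only Lévy measure $\widetilde\rho$ with $\nu_\circledast^{(1,0,\widetilde\rho)}=\nu_\circledast^{(1,0,\rho)}$ is $\widetilde\rho=\rho$. *)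

theory Defs
  imports "HOL-Analysis.Analysis"
begin

definition circleT :: "complex set" where
  "circleT = sphere 0 1"

definition borelT :: "complex measure" where
  "borelT = restrict_space borel circleT"

definition levy_measure :: "complex measure \<Rightarrow> bool" where
  "levy_measure \<rho> \<longleftrightarrow> sets \<rho> = sets borelT \<and> emeasure \<rho> {1} = 0
     \<and> integrable \<rho> (\<lambda>s. 1 - Re s)"

text \<open>n-th Fourier coefficient of the probability measure nu^(1,0,rho).\<close>
definition levy_coeff :: "complex measure \<Rightarrow> int \<Rightarrow> complex" where
  "levy_coeff \<rho> n = exp (\<integral>s. (s powi n - 1 - \<i> * of_int n * of_real (Im s)) \<partial>\<rho>)"

definition L_unique :: "complex measure \<Rightarrow> bool" where
  "L_unique \<rho> \<longleftrightarrow> (\<forall>\<rho>'. levy_measure \<rho>' \<and> (\<forall>n. levy_coeff \<rho>' n = levy_coeff \<rho> n)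
                      \<longrightarrow> \<rho>' = \<rho>)"

definition alg_indep_rat :: "nat \<Rightarrow> (nat \<Rightarrow> real) \<Rightarrow> bool" where
  "alg_indep_rat m x \<longleftrightarrow>
     (\<forall>(S :: (nat \<Rightarrow> nat) set) (a :: (nat \<Rightarrow> nat) \<Rightarrow> rat).
        finite S \<and> (\<forall>e\<in>S. \<forall>k. k \<notin> {1..m} \<longrightarrow> e k = 0)
        \<and> (\<Sum>e\<in>S. of_rat (a e) * (\<Prod>k\<in>{1..m}. x k ^ e k)) = 0
        \<longrightarrow> (\<forall>e\<in>S. a e = 0))"

definition discrete_levy ::
  "nat \<Rightarrow> (nat \<Rightarrow> complex) \<Rightarrow> (nat \<Rightarrow> real) \<Rightarrow> (nat \<Rightarrow> real) \<Rightarrow> complex measure" where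
  "discrete_levy m \<alpha> c d = measure_of circleT (sets borelT)
     (\<lambda>A. \<Sum>k\<in>{1..m}. ennreal (c k) * indicator A (\<alpha> k) + ennreal (d k) * indicator A (cnj (\<alpha> k)))"

end

theory Submission
  imports Defs "HOL-Computational_Algebra.Polynomial"
begin


lemma space_borelT[simp]: "space borelT = circleT"
  by (simp add: borelT_def space_restrict_space)

lemma circleT_iff: "s \<in> circleT \<longleftrightarrow> norm s = 1"
  by (simp add: circleT_def)

lemma singleton_borelT: "a \<in> circleT \<Longrightarrow> {a} \<in> sets borelT"
  unfolding borelT_def sets_restrict_space by (rule image_eqI[of _ _ "{a}"]) auto

lemma fs_emeasure:
  assumes "finite F" "AE x in M. x \<in> F" "\<And>a. a \<in> F \<Longrightarrow> {a} \<in> sets M" "A \<in> sets M"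
  shows "emeasure M A = (\<Sum>a\<in>F. emeasure M {a} * indicator A a)"
proof -
  have "emeasure M A = (\<integral>\<^sup>+x. indicator A x \<partial>M)" using assms(4) by simp
  also have "\<dots> = (\<integral>\<^sup>+x. (\<Sum>a\<in>F. indicator A a * indicator {a} x) \<partial>M)"
  proof (rule nn_integral_cong_AE)
    show "AE x in M. indicator A x = (\<Sum>a\<in>F. indicator A a * indicator {a} x :: ennreal)"
      using assms(2)
    proof eventually_elim
      case (elim x)
      have "(\<Sum>a\<in>F. indicator A a * indicator {a} x :: ennreal) = (\<Sum>a\<in>F. if a = x then indicator A x else 0)"
        by (intro sum.cong) (auto simp: indicator_def)
      also have "\<dots> = indicator A x" using elim assms(1) by (simp add: sum.delta')
      finally show ?case by simp
    qed
  qed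
  also have "\<dots> = (\<Sum>a\<in>F. (\<integral>\<^sup>+x. indicator A a * indicator {a} x \<partial>M))"
    using assms(3) by (intro nn_integral_sum) auto
  also have "\<dots> = (\<Sum>a\<in>F. emeasure M {a} * indicator A a)"
    using assms(3) by (intro sum.cong refl) (simp add: nn_integral_cmult_indicator mult.commute)
  finally show ?thesis .
qed

lemma fs_integral:
  fixes f :: "_ \<Rightarrow> 'b::{banach, second_countable_topology}"
  assumes "finite F" "AE x in M. x \<in> F" "\<And>a. a \<in> F \<Longrightarrow> {a} \<in> sets M"
    "\<And>a. a \<in> F \<Longrightarrow> emeasure M {a} < \<infinity>" "f \<in> borel_measurable M"
  shows "integrable M f" "integral\<^sup>L M f = (\<Sum>a\<in>F. measure M {a} *\<^sub>R f a)"
proof -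
  define g where "g x = (\<Sum>a\<in>F. indicator {a} x *\<^sub>R f a)" for x
  have ae: "AE x in M. f x = g x"
    using assms(2)
  proof eventually_elim
    case (elim x)
    have "g x = (\<Sum>a\<in>F. if a = x then f x else 0)"
      unfolding g_def by (intro sum.cong) (auto simp: indicator_def)
    also have "\<dots> = f x" using elim assms(1) by (simp add: sum.delta')
    finally show ?case by simp
  qed
  have gm: "g \<in> borel_measurable M" unfolding g_def using assms(3) by measurable
  have gi: "integrable M g" unfolding g_def 
  proof (rule Bochner_Integration.integrable_sum)
    fix a assume "a \<in> F"
    then show "integrable M (\<lambda>x. indicator {a} x *\<^sub>R f a)"
      using assms(3,4) by (intro integrable_scaleR_left integrable_real_indicator) auto
  qed
  show "integrable M f" using integrable_cong_AE[OF assms(5) gm ae] gi by simp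
  have "integral\<^sup>L M f = integral\<^sup>L M g" using integral_cong_AE[OF assms(5) gm ae] .
  also have "\<dots> = (\<Sum>a\<in>F. integral\<^sup>L M (\<lambda>x. indicator {a} x *\<^sub>R f a))"
    unfolding g_def using assms(3,4)
    by (intro Bochner_Integration.integral_sum integrable_scaleR_left integrable_real_indicator) (auto intro!: integrable_scaleR_left integrable_real_indicator)
  also have "\<dots> = (\<Sum>a\<in>F. measure M {a} *\<^sub>R f a)"
  proof (intro sum.cong refl)
    fix a assume "a \<in> F"
    then have "{a} \<inter> space M = {a}" using assms(3) sets.sets_into_space by blast
    then show "integral\<^sup>L M (\<lambda>x. indicator {a} x *\<^sub>R f a) = measure M {a} *\<^sub>R f a"
      using assms(3,4) \<open>a \<in> F\<close> by (subst integral_scaleR_left) (simp_all)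
  qed
  finally show "integral\<^sup>L M f = (\<Sum>a\<in>F. measure M {a} *\<^sub>R f a)" .
qed


lemma
  fixes f :: "_ \<Rightarrow> 'b::{banach, second_countable_topology}"
  assumes "\<And>a. a \<in> F \<Longrightarrow> {a} \<in> sets M"
    "\<And>a. a \<in> F \<Longrightarrow> emeasure M {a} < \<infinity>" 
  shows "integrable M (\<lambda>x. \<Sum>a\<in>F. indicator {a} x *\<^sub>R f a)"
  apply (rule Bochner_Integration.integrable_sum)
  apply (rule integrable_scaleR_left)
  using assms by (rule integrable_real_indicator) 


lemma dl_sets[simp]: "sets (discrete_levy m \<alpha> c d) = sets borelT"
proof -
  have "sets borelT \<subseteq> Pow circleT" using sets.space_closed[of borelT] by simp
  then have "sets (discrete_levy m \<alpha> c d) = sigma_sets circleT (sets borelT)"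
    unfolding discrete_levy_def by (rule sets_measure_of)
  also have "\<dots> = sets borelT" using sets.sigma_sets_eq[of borelT] by simp
  finally show ?thesis .
qed

lemma dl_emeasure:
  assumes "B \<in> sets borelT"
  shows "emeasure (discrete_levy m \<alpha> c d) B =
    (\<Sum>k\<in>{1..m}. ennreal (c k) * indicator B (\<alpha> k) + ennreal (d k) * indicator B (cnj (\<alpha> k)))"
  unfolding discrete_levy_def
proof (rule emeasure_measure_of_sigma[OF _ _ _ assms])
  show "sigma_algebra circleT (sets borelT)"
    using sets.sigma_algebra_axioms[of borelT] by simp
  show "positive (sets borelT) (\<lambda>A. \<Sum>k\<in>{1..m}. ennreal (c k) * indicator A (\<alpha> k) + ennreal (d k) * indicator A (cnj (\<alpha> k)))"
    by (simp add: positive_def)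
  show "countably_additive (sets borelT) (\<lambda>A. \<Sum>k\<in>{1..m}. ennreal (c k) * indicator A (\<alpha> k) + ennreal (d k) * indicator A (cnj (\<alpha> k)))"
    unfolding countably_additive_def
  proof (intro allI impI)
    fix A :: "nat \<Rightarrow> complex set" assume dj: "disjoint_family A"
    have "(\<Sum>i. \<Sum>k\<in>{1..m}. ennreal (c k) * indicator (A i) (\<alpha> k) + ennreal (d k) * indicator (A i) (cnj (\<alpha> k)))
      = (\<Sum>k\<in>{1..m}. \<Sum>i. ennreal (c k) * indicator (A i) (\<alpha> k) + ennreal (d k) * indicator (A i) (cnj (\<alpha> k)))"
      by (rule suminf_sum) (rule summableI)
    also have "\<dots> = (\<Sum>k\<in>{1..m}. ennreal (c k) * indicator (\<Union>i. A i) (\<alpha> k) + ennreal (d k) * indicator (\<Union>i. A i) (cnj (\<alpha> k)))"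
    proof (rule sum.cong[OF refl])
      fix k
      have "(\<Sum>i. ennreal (c k) * indicator (A i) (\<alpha> k) + ennreal (d k) * indicator (A i) (cnj (\<alpha> k)))
        = (\<Sum>i. ennreal (c k) * indicator (A i) (\<alpha> k)) + (\<Sum>i. ennreal (d k) * indicator (A i) (cnj (\<alpha> k)))"
        by (rule suminf_add[symmetric]) (rule summableI)+
      also have "\<dots> = ennreal (c k) * indicator (\<Union>i. A i) (\<alpha> k) + ennreal (d k) * indicator (\<Union>i. A i) (cnj (\<alpha> k))"
        using dj by (simp add: suminf_indicator)
      finally show "(\<Sum>i. ennreal (c k) * indicator (A i) (\<alpha> k) + ennreal (d k) * indicator (A i) (cnj (\<alpha> k))) =
          ennreal (c k) * indicator (\<Union>i. A i) (\<alpha> k) + ennreal (d k) * indicator (\<Union>i. A i) (cnj (\<alpha> k))" .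
    qed
    finally show "(\<Sum>i. \<Sum>k\<in>{1..m}. ennreal (c k) * indicator (A i) (\<alpha> k) + ennreal (d k) * indicator (A i) (cnj (\<alpha> k)))
      = (\<Sum>k\<in>{1..m}. ennreal (c k) * indicator (\<Union> (range A)) (\<alpha> k) + ennreal (d k) * indicator (\<Union> (range A)) (cnj (\<alpha> k)))" by simp
  qed
qed



lemma meas_T:
  fixes f :: "complex \<Rightarrow> 'b::topological_space"
  assumes "sets M = sets borelT" "f \<in> borel_measurable borel"
  shows "f \<in> borel_measurable M"
proof -
  have "f \<in> borel_measurable borelT" unfolding borelT_def
    by (rule measurable_restrict_space1) fact
  moreover have "(borel_measurable M :: (complex \<Rightarrow> 'b) set) = borel_measurable borelT"
    by (rule measurable_cong_sets[OF assms(1)]) simp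
  ultimately show ?thesis by simp
qed

lemma space_T: "sets M = sets borelT \<Longrightarrow> space M = circleT"
  by (metis sets_eq_imp_space_eq space_borelT)

lemma pow_sub1_bound:
  fixes s :: complex assumes "norm s = 1"
  shows "norm (s ^ n - 1) \<le> n * norm (s - 1)"
proof (induction n)
  case 0 then show ?case by simp
next
  case (Suc n)
  have "s ^ Suc n - 1 = s * (s ^ n - 1) + (s - 1)" by (simp add: algebra_simps)
  then have "norm (s ^ Suc n - 1) \<le> norm (s * (s ^ n - 1)) + norm (s - 1)"
    by (metis norm_triangle_ineq)
  also have "norm (s * (s ^ n - 1)) = norm (s ^ n - 1)" using assms by (simp add: norm_mult)
  finally show ?case using Suc by (simp add: algebra_simps)
qed

lemma D_bound:
  fixes s :: complex assumes "norm s = 1"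
  shows "norm (s ^ n - 1 - of_nat n * (s - 1)) \<le> of_nat n ^ 2 * norm (s - 1) ^ 2"
proof (induction n)
  case 0 then show ?case by simp
next
  case (Suc n)
  have "s ^ Suc n - 1 - of_nat (Suc n) * (s - 1) = (s ^ n - 1) * (s - 1) + (s ^ n - 1 - of_nat n * (s - 1))"
    by (simp add: algebra_simps)
  then have "norm (s ^ Suc n - 1 - of_nat (Suc n) * (s - 1)) \<le> norm ((s ^ n - 1) * (s - 1)) + norm (s ^ n - 1 - of_nat n * (s - 1))"
    by (metis norm_triangle_ineq)
  also have "norm ((s ^ n - 1) * (s - 1)) \<le> n * norm (s - 1) * norm (s - 1)"
    unfolding norm_mult by (rule mult_right_mono[OF pow_sub1_bound[OF assms]]) simp
  finally have "norm (s ^ Suc n - 1 - of_nat (Suc n) * (s - 1)) \<le> n * norm (s - 1) ^ 2 + of_nat n ^ 2 * norm (s - 1) ^ 2"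
    using Suc by (simp add: power2_eq_square)
  also have "\<dots> = (real n + real n ^ 2) * norm (s - 1) ^ 2" by (simp add: algebra_simps)
  also have "\<dots> \<le> of_nat (Suc n) ^ 2 * norm (s - 1) ^ 2"
    by (intro mult_right_mono) (auto simp: power2_eq_square algebra_simps)
  finally show ?case .
qed

lemma norm_sub1_sq:
  fixes s :: complex assumes "norm s = 1"
  shows "norm (s - 1) ^ 2 = 2 - 2 * Re s"
proof -
  have "Re s ^ 2 + Im s ^ 2 = 1" using assms by (metis cmod_power2 one_power2)
  moreover have "norm (s - 1) ^ 2 = (Re s - 1) ^ 2 + Im s ^ 2" by (simp add: cmod_power2)
  ultimately show ?thesis by (simp add: power2_eq_square algebra_simps)
qed

lemma h_bound:
  fixes s :: complex assumes "norm s = 1"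
  shows "norm (s ^ n - 1 - \<i> * of_nat n * of_real (Im s)) \<le> (2 * real n ^ 2 + real n) * (1 - Re s)"
proof -
  have e: "s ^ n - 1 - \<i> * of_nat n * of_real (Im s) = (s ^ n - 1 - of_nat n * (s - 1)) + of_real (real n * (Re s - 1))"
    by (simp add: complex_eq_iff algebra_simps)
  have "norm (s ^ n - 1 - \<i> * of_nat n * of_real (Im s)) \<le> norm (s ^ n - 1 - of_nat n * (s - 1)) + norm (of_real (real n * (Re s - 1)) :: complex)"
    unfolding e by (rule norm_triangle_ineq)
  also have "norm (of_real (real n * (Re s - 1)) :: complex) = real n * (1 - Re s)"
  proof -
    have "Re s \<le> 1" using abs_Re_le_cmod[of s] assms by simp
    have "norm (of_real (real n * (Re s - 1)) :: complex) = \<bar>real n * (Re s - 1)\<bar>" by (rule norm_of_real)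
    also have "\<dots> = real n * (1 - Re s)" using \<open>Re s \<le> 1\<close> by (simp add: abs_mult)
    finally show ?thesis .
  qed
  also have "norm (s ^ n - 1 - of_nat n * (s - 1)) \<le> real n ^ 2 * (2 - 2 * Re s)"
    using D_bound[OF assms, of n] norm_sub1_sq[OF assms] by simp
  finally show ?thesis by (simp add: algebra_simps)
qed

definition hh :: "nat \<Rightarrow> complex \<Rightarrow> complex" where
  "hh n s = s ^ n - 1 - \<i> * of_nat n * of_real (Im s)"

lemma hh_meas[measurable]: "hh n \<in> borel_measurable borel"
  unfolding hh_def by measurable

lemma levy_hh_integrable:
  assumes "levy_measure M"
  shows "integrable M (hh n)"
proof (rule Bochner_Integration.integrable_bound)
  have s: "sets M = sets borelT" using assms by (simp add: levy_measure_def)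
  show "integrable M (\<lambda>s. (2 * real n ^ 2 + real n) * (1 - Re s))"
    using assms by (simp add: levy_measure_def)
  show "hh n \<in> borel_measurable M" by (rule meas_T[OF s]) simp
  show "AE x in M. norm (hh n x) \<le> norm ((2 * real n ^ 2 + real n) * (1 - Re x))"
  proof (rule AE_I2)
    fix x assume "x \<in> space M"
    then have x: "norm x = 1" using space_T[OF s] by (simp add: circleT_iff)
    have "1 - Re x \<ge> 0" using abs_Re_le_cmod[of x] x by simp
    then show "norm (hh n x) \<le> norm ((2 * real n ^ 2 + real n) * (1 - Re x))"
      using h_bound[OF x, of n] unfolding hh_def by simp
  qed
qed

lemma levy_coeff_nat: "levy_coeff M (int n) = exp (integral\<^sup>L M (hh n))"
  unfolding levy_coeff_def hh_def by simp

lemma levy_Re: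
  assumes "levy_measure M"
  shows "integrable M (\<lambda>s. Re (s ^ n) - 1)" "integral\<^sup>L M (\<lambda>s. Re (s ^ n) - 1) = Re (integral\<^sup>L M (hh n))"
proof -
  have "(\<lambda>s. Re (s ^ n) - 1) = (\<lambda>s. Re (hh n s))" by (simp add: hh_def fun_eq_iff)
  then show "integrable M (\<lambda>s. Re (s ^ n) - 1)" "integral\<^sup>L M (\<lambda>s. Re (s ^ n) - 1) = Re (integral\<^sup>L M (hh n))"
    using levy_hh_integrable[OF assms, of n] by (simp_all add: integrable_Re)
qed



definition Vc :: "(complex \<Rightarrow> real) set" where
  "Vc = {f. \<exists>N b. \<forall>s\<in>circleT. f s = (\<Sum>n\<le>N. b n * Re (s ^ n))}"

lemma V_cong: "f \<in> Vc \<Longrightarrow> (\<And>s. s \<in> circleT \<Longrightarrow> g s = f s) \<Longrightarrow> g \<in> Vc"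
  unfolding Vc_def by auto

lemma V_const: "(\<lambda>s. a) \<in> Vc"
  unfolding Vc_def by (rule CollectI, rule exI[of _ 0], rule exI[of _ "\<lambda>_. a"]) simp

lemma V_mono: "(\<lambda>s. Re (s ^ n)) \<in> Vc"
  unfolding Vc_def
proof (rule CollectI, rule exI[of _ n], rule exI[of _ "\<lambda>j. if j = n then 1 else 0"], intro ballI)
  fix s :: complex
  have "(\<Sum>j\<le>n. (if j = n then 1 else 0) * Re (s ^ j)) = (\<Sum>j\<le>n. if j = n then Re (s ^ j) else 0)"
    by (intro sum.cong) auto
  also have "\<dots> = Re (s ^ n)" by (simp add: sum.delta')
  finally show "Re (s ^ n) = (\<Sum>j\<le>n. (if j = n then 1 else 0) * Re (s ^ j))" by simp
qed

lemma sum_ext0: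
  fixes R :: "nat \<Rightarrow> real"
  assumes "N1 \<le> N"
  shows "(\<Sum>j\<le>N. (if j \<le> N1 then b j else 0) * R j) = (\<Sum>j\<le>N1. b j * R j)"
proof -
  have "(\<Sum>j\<le>N. (if j \<le> N1 then b j else 0) * R j) = (\<Sum>j\<in>{..N}. if j \<in> {..N1} then b j * R j else 0)"
    by (intro sum.cong) auto
  also have "\<dots> = (\<Sum>j\<in>{..N} \<inter> {..N1}. b j * R j)" by (rule sum.inter_restrict[symmetric]) simp
  also have "{..N} \<inter> {..N1} = {..N1}" using assms by auto
  finally show ?thesis .
qed

lemma V_add: "f \<in> Vc \<Longrightarrow> g \<in> Vc \<Longrightarrow> (\<lambda>s. f s + g s) \<in> Vc"
proof -
  assume "f \<in> Vc" "g \<in> Vc"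
  then obtain N1 b1 N2 b2 where f: "\<forall>s\<in>circleT. f s = (\<Sum>n\<le>N1. b1 n * Re (s ^ n))"
    and g: "\<forall>s\<in>circleT. g s = (\<Sum>n\<le>N2. b2 n * Re (s ^ n))" unfolding Vc_def by auto
  let ?N = "max N1 N2"
  let ?b = "\<lambda>j. (if j \<le> N1 then b1 j else 0) + (if j \<le> N2 then b2 j else 0)"
  show ?thesis unfolding Vc_def
  proof (rule CollectI, rule exI[of _ ?N], rule exI[of _ ?b], intro ballI)
    fix s assume "s \<in> circleT"
    have "(\<Sum>n\<le>?N. ?b n * Re (s ^ n)) = (\<Sum>n\<le>?N. (if n \<le> N1 then b1 n else 0) * Re (s ^ n)) + (\<Sum>n\<le>?N. (if n \<le> N2 then b2 n else 0) * Re (s ^ n))"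
      by (simp add: distrib_right sum.distrib)
    also have "\<dots> = f s + g s" using f g \<open>s \<in> circleT\<close> by (simp add: sum_ext0)
    finally show "f s + g s = (\<Sum>n\<le>?N. ?b n * Re (s ^ n))" by simp
  qed
qed

lemma V_scale: "f \<in> Vc \<Longrightarrow> (\<lambda>s. a * f s) \<in> Vc"
proof -
  assume "f \<in> Vc"
  then obtain N b where f: "\<forall>s\<in>circleT. f s = (\<Sum>n\<le>N. b n * Re (s ^ n))" unfolding Vc_def by auto
  show ?thesis unfolding Vc_def
    by (rule CollectI, rule exI[of _ N], rule exI[of _ "\<lambda>n. a * b n"]) (simp add: f sum_distrib_left mult.assoc)
qed

lemma V_sum: "finite I \<Longrightarrow> (\<And>i. i \<in> I \<Longrightarrow> f i \<in> Vc) \<Longrightarrow> (\<lambda>s. \<Sum>i\<in>I. f i s) \<in> Vc"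
proof (induction I rule: finite_induct)
  case empty then show ?case using V_const[of 0] by simp
next
  case (insert x F)
  then show ?case using V_add[of "f x" "\<lambda>s. \<Sum>i\<in>F. f i s"] by simp
qed

lemma Re_mult_Re: "Re a * Re b = (Re (a * b) + Re (cnj a * b)) / 2"
  by (simp add: algebra_simps)

lemma V_Re_term: "(\<lambda>s. Re s * Re (s ^ n)) \<in> Vc"
proof (cases n)
  case 0
  then show ?thesis using V_mono[of 1] by simp
next
  case (Suc k)
  have "(\<lambda>s. (1/2) * Re (s ^ (k + 2)) + (1/2) * Re (s ^ k)) \<in> Vc"
    by (intro V_add V_scale V_mono)
  then show ?thesis
  proof (rule V_cong)
    fix s assume "s \<in> circleT"
    then have "cnj s * s = 1" using complex_norm_square[of s] by (simp add: circleT_iff mult.commute)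
    then have "cnj s * s ^ n = s ^ k" using Suc by (simp add: mult.assoc[symmetric])
    moreover have "s * s ^ n = s ^ (k + 2)" using Suc by simp
    ultimately show "Re s * Re (s ^ n) = 1 / 2 * Re (s ^ (k + 2)) + 1 / 2 * Re (s ^ k)"
      by (subst Re_mult_Re) (simp only:, simp)
  qed
qed

lemma V_Re_mult: "f \<in> Vc \<Longrightarrow> (\<lambda>s. Re s * f s) \<in> Vc"
proof -
  assume "f \<in> Vc"
  then obtain N b where f: "\<forall>s\<in>circleT. f s = (\<Sum>n\<le>N. b n * Re (s ^ n))" unfolding Vc_def by auto
  have "(\<lambda>s. \<Sum>n\<le>N. b n * (Re s * Re (s ^ n))) \<in> Vc"
    by (intro V_sum V_scale V_Re_term) simp
  then show ?thesis
  proof (rule V_cong)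
    fix s assume "s \<in> circleT"
    then show "Re s * f s = (\<Sum>n\<le>N. b n * (Re s * Re (s ^ n)))"
      using f by (simp add: sum_distrib_left mult.left_commute)
  qed
qed

lemma V_lin_mult: "f \<in> Vc \<Longrightarrow> (\<lambda>s. (Re s - a) * f s) \<in> Vc"
proof -
  assume f: "f \<in> Vc"
  have "(\<lambda>s. Re s * f s + (- a) * f s) \<in> Vc" by (intro V_add V_Re_mult V_scale f)
  then show ?thesis by (rule V_cong) (simp add: left_diff_distrib)
qed

lemma V_poly: "finite A \<Longrightarrow> f \<in> Vc \<Longrightarrow> (\<lambda>s. f s * (\<Prod>k\<in>A. (Re s - x k) ^ 2)) \<in> Vc"
proof (induction A rule: finite_induct)
  case empty then show ?case by simp
next
  case (insert j F)
  then have "(\<lambda>s. (Re s - x j) * ((Re s - x j) * (f s * (\<Prod>k\<in>F. (Re s - x k) ^ 2)))) \<in> Vc"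
    by (intro V_lin_mult) simp
  then show ?case
  proof (rule V_cong)
    fix s
    have "f s * (\<Prod>k\<in>insert j F. (Re s - x k) ^ 2) = f s * ((Re s - x j) ^ 2 * (\<Prod>k\<in>F. (Re s - x k) ^ 2))"
      using insert by simp
    then show "f s * (\<Prod>k\<in>insert j F. (Re s - x k) ^ 2) = (Re s - x j) * ((Re s - x j) * (f s * (\<Prod>k\<in>F. (Re s - x k) ^ 2)))"
      by (simp only: power2_eq_square mult_ac)
  qed
qed

lemma V_levy:
  assumes M: "levy_measure M" and f: "\<forall>s\<in>circleT. f s = (\<Sum>n\<le>N. b n * Re (s ^ n))"
  shows "integrable M (\<lambda>s. f s - f 1)"
    "integral\<^sup>L M (\<lambda>s. f s - f 1) = (\<Sum>n\<le>N. b n * Re (integral\<^sup>L M (hh n)))"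
proof -
  have s: "sets M = sets borelT" using M by (simp add: levy_measure_def)
  have "1 \<in> circleT" by (simp add: circleT_iff)
  then have eq: "\<And>s. s \<in> space M \<Longrightarrow> f s - f 1 = (\<Sum>n\<le>N. b n * (Re (s ^ n) - 1))"
    using f space_T[OF s] by (simp add: sum_subtractf algebra_simps)
  have i: "integrable M (\<lambda>s. \<Sum>n\<le>N. b n * (Re (s ^ n) - 1))"
    using levy_Re(1)[OF M] by (intro Bochner_Integration.integrable_sum integrable_mult_right) auto
  show "integrable M (\<lambda>s. f s - f 1)"
  proof -
    have "integrable M (\<lambda>s. f s - f 1) = integrable M (\<lambda>s. \<Sum>n\<le>N. b n * (Re (s ^ n) - 1))"
      by (rule Bochner_Integration.integrable_cong[OF refl]) (rule eq)
    then show ?thesis using i by simp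
  qed
  have "integral\<^sup>L M (\<lambda>s. f s - f 1) = integral\<^sup>L M (\<lambda>s. \<Sum>n\<le>N. b n * (Re (s ^ n) - 1))"
    using eq by (rule Bochner_Integration.integral_cong[OF refl])
  also have "\<dots> = (\<Sum>n\<le>N. b n * integral\<^sup>L M (\<lambda>s. Re (s ^ n) - 1))"
    using levy_Re(1)[OF M] by (subst Bochner_Integration.integral_sum) (auto intro: integrable_mult_right)
  also have "\<dots> = (\<Sum>n\<le>N. b n * Re (integral\<^sup>L M (hh n)))"
    using levy_Re(2)[OF M] by simp
  finally show "integral\<^sup>L M (\<lambda>s. f s - f 1) = (\<Sum>n\<le>N. b n * Re (integral\<^sup>L M (hh n)))" .
qed

lemma V_int:
  assumes M1: "levy_measure M1" and M2: "levy_measure M2"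
    and eq: "\<And>n. Re (integral\<^sup>L M1 (hh n)) = Re (integral\<^sup>L M2 (hh n))"
    and f: "f \<in> Vc"
  shows "integrable M1 (\<lambda>s. f s - f 1)"
    "integral\<^sup>L M1 (\<lambda>s. f s - f 1) = integral\<^sup>L M2 (\<lambda>s. f s - f 1)"
proof -
  obtain N b where f: "\<forall>s\<in>circleT. f s = (\<Sum>n\<le>N. b n * Re (s ^ n))" using f unfolding Vc_def by auto
  show "integrable M1 (\<lambda>s. f s - f 1)" using V_levy(1)[OF M1 f] .
  show "integral\<^sup>L M1 (\<lambda>s. f s - f 1) = integral\<^sup>L M2 (\<lambda>s. f s - f 1)"
    using V_levy(2)[OF M1 f] V_levy(2)[OF M2 f] eq by simp
qed



definition act :: "nat \<Rightarrow> complex poly \<Rightarrow> (nat \<Rightarrow> complex) \<Rightarrow> nat \<Rightarrow> complex" where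
  "act N q h n = (\<Sum>i\<le>N. coeff q i * h (n + i))"

lemma poly_N: "degree (q::complex poly) \<le> N \<Longrightarrow> poly q z = (\<Sum>i\<le>N. coeff q i * z ^ i)"
proof -
  assume d: "degree q \<le> N"
  have "poly q z = (\<Sum>i\<le>degree q. coeff q i * z ^ i)" by (rule poly_altdef)
  also have "\<dots> = (\<Sum>i\<le>N. coeff q i * z ^ i)"
    by (rule sum.mono_neutral_left) (use d in \<open>auto simp: coeff_eq_0\<close>)
  finally show ?thesis .
qed

lemma act_expsum:
  assumes "degree q \<le> N" "finite A"
  shows "act N q (\<lambda>n. \<Sum>k\<in>A. u k * a k ^ n + v k * b k ^ n) n =
         (\<Sum>k\<in>A. u k * poly q (a k) * a k ^ n + v k * poly q (b k) * b k ^ n)"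
proof -
  have "act N q (\<lambda>n. \<Sum>k\<in>A. u k * a k ^ n + v k * b k ^ n) n
      = (\<Sum>i\<le>N. \<Sum>k\<in>A. coeff q i * (u k * a k ^ (n+i) + v k * b k ^ (n+i)))"
    unfolding act_def by (simp add: sum_distrib_left)
  also have "\<dots> = (\<Sum>k\<in>A. \<Sum>i\<le>N. coeff q i * (u k * a k ^ (n+i) + v k * b k ^ (n+i)))"
    by (rule sum.swap)
  also have "\<dots> = (\<Sum>k\<in>A. u k * poly q (a k) * a k ^ n + v k * poly q (b k) * b k ^ n)"
  proof (rule sum.cong[OF refl])
    fix k
    show "(\<Sum>i\<le>N. coeff q i * (u k * a k ^ (n+i) + v k * b k ^ (n+i))) =
        u k * poly q (a k) * a k ^ n + v k * poly q (b k) * b k ^ n"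
      unfolding poly_N[OF assms(1)]
      by (simp add: sum_distrib_left sum_distrib_right sum.distrib power_add algebra_simps)
  qed
  finally show ?thesis .
qed

lemma act_add: "act N (p + q) h n = act N p h n + act N q h n"
  by (simp add: act_def distrib_right sum.distrib)

lemma act_smult: "act N (smult c p) h n = c * act N p h n"
  by (simp add: act_def sum_distrib_left mult.assoc)

lemma act_sum: "act N (\<Sum>T\<in>S. f T) h n = (\<Sum>T\<in>S. act N (f T) h n)"
  unfolding act_def coeff_sum sum_distrib_right by (rule sum.swap)

lemma act_cmult_seq: "act N q (\<lambda>n. c * h n) n = c * act N q h n"
  by (simp add: act_def sum_distrib_left mult.left_commute)

definition intp :: "complex poly \<Rightarrow> bool" where "intp p \<longleftrightarrow> (\<forall>i. coeff p i \<in> \<int>)"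

lemma intp_mult: "intp p \<Longrightarrow> intp q \<Longrightarrow> intp (p * q)"
  unfolding intp_def coeff_mult by (auto intro!: Ints_sum Ints_mult)

lemma intp_1: "intp 1"
  unfolding intp_def by (simp add: coeff_1)

lemma intp_power: "intp p \<Longrightarrow> intp (p ^ n)"
  by (induction n) (auto intro: intp_mult intp_1)

lemma intp_A: "intp [:0, -2:]"
  unfolding intp_def by (auto simp: coeff_pCons split: nat.split)

lemma intp_B: "intp [:1, 0, 1:]"
  unfolding intp_def by (auto simp: coeff_pCons split: nat.split)

lemma act_int: "intp q \<Longrightarrow> act N q (\<lambda>n. of_int (J n)) n \<in> \<int>"
  unfolding act_def intp_def by (auto intro!: Ints_sum Ints_mult)

lemma prod_smult_const: "finite T \<Longrightarrow> (\<Prod>k\<in>T. smult (c k) p) = smult (\<Prod>k\<in>T. c k) (p ^ card T)"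
  by (induction T rule: finite_induct) (auto simp: mult_smult_left mult_smult_right mult_ac)

lemma monom_pow: "[:0, c:] ^ m = monom (c ^ m) m"
proof -
  have "[:0, c:] = monom c 1" by (simp add: monom_Suc monom_0)
  then show ?thesis by (simp add: monom_power)
qed


lemma alg_part:
  fixes x :: "nat \<Rightarrow> real" and J :: "nat \<Rightarrow> int" and a b u v :: "nat \<Rightarrow> complex"
  assumes indep: "alg_indep_rat m x"
    and roots: "\<And>k. k \<in> {1..m} \<Longrightarrow> poly [:1, - 2 * of_real (x k), 1:] (a k) = 0 \<and> poly [:1, - 2 * of_real (x k), 1:] (b k) = 0"
    and w: "\<And>n. (\<Sum>k\<in>{1..m}. u k * a k ^ n + v k * b k ^ n) = c0 * of_int (J n)"
    and c0: "c0 \<noteq> 0"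
  shows "J (n + m) = 0"
proof -
  define A where "A = {1..m}"
  have finA: "finite A" and cardA: "card A = m" by (simp_all add: A_def)
  define Lq where "Lq k = ([:1, - 2 * of_real (x k), 1:] :: complex poly)" for k :: nat
  define Q where "Q = (\<Prod>k\<in>A. Lq k)"
  define N where "N = 2 * m"
  define Jc where "Jc n = (of_int (J n) :: complex)" for n
  have degQ: "degree Q \<le> N"
  proof -
    have "degree Q \<le> sum (degree \<circ> Lq) A" unfolding Q_def by (rule degree_prod_sum_le[OF finA])
    also have "\<dots> \<le> sum (\<lambda>_. 2) A" by (intro sum_mono) (simp add: Lq_def)
    also have "\<dots> = N" by (simp add: cardA N_def)
    finally show ?thesis .
  qed
  have polyQ: "poly Q (a k) = 0 \<and> poly Q (b k) = 0" if "k \<in> A" for k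
    using roots[of k] that finA unfolding Q_def poly_prod Lq_def A_def
    by (auto simp: prod_zero_iff)
  have "act N Q (\<lambda>n. \<Sum>k\<in>A. u k * a k ^ n + v k * b k ^ n) n = 0"
    by (subst act_expsum[OF degQ finA]) (simp add: polyQ)
  moreover have "(\<lambda>n. \<Sum>k\<in>A. u k * a k ^ n + v k * b k ^ n) = (\<lambda>n. c0 * Jc n)"
    using w by (simp add: A_def Jc_def)
  ultimately have actQ: "act N Q Jc n = 0" using c0 by (simp add: act_cmult_seq)
  define qT where "qT T = ([:0, -2:] ^ card T * [:1, 0, 1:] ^ card (A - T) :: complex poly)" for T
  have LqE: "Lq k = smult (of_real (x k)) [:0, -2:] + [:1, 0, 1:]" for k
    by (simp add: Lq_def)
  have QE: "Q = (\<Sum>T\<in>Pow A. smult (\<Prod>k\<in>T. of_real (x k)) (qT T))"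
  proof -
    have "Q = (\<Sum>T\<in>Pow A. (\<Prod>k\<in>T. smult (of_real (x k)) [:0, -2:]) * (\<Prod>k\<in>A - T. [:1, 0, 1:]))"
      unfolding Q_def LqE by (rule prod_add[OF finA])
    also have "\<dots> = (\<Sum>T\<in>Pow A. smult (\<Prod>k\<in>T. of_real (x k)) (qT T))"
    proof (rule sum.cong[OF refl])
      fix T assume "T \<in> Pow A"
      then have "finite T" using finA finite_subset by blast
      then show "(\<Prod>k\<in>T. smult (of_real (x k)) [:0, -2:]) * (\<Prod>k\<in>A - T. [:1, 0, 1:]) =
          smult (\<Prod>k\<in>T. of_real (x k)) (qT T)"
        by (simp only: prod_smult_const[OF \<open>finite T\<close>] prod_constant qT_def mult_smult_left)
    qed
    finally show ?thesis .
  qed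
  have "\<forall>T. \<exists>z. act N (qT T) Jc n = of_int z"
  proof
    fix T
    have "intp (qT T)" unfolding qT_def by (intro intp_mult intp_power intp_A intp_B)
    then have "act N (qT T) Jc n \<in> \<int>" unfolding Jc_def by (rule act_int)
    then show "\<exists>z. act N (qT T) Jc n = of_int z" by (auto elim: Ints_cases)
  qed
  then obtain z where z: "\<And>T. act N (qT T) Jc n = of_int (z T)" by metis
  have "act N Q Jc n = (\<Sum>T\<in>Pow A. (\<Prod>k\<in>T. of_real (x k)) * of_int (z T))"
    unfolding QE act_sum act_smult z ..
  also have "\<dots> = of_real (\<Sum>T\<in>Pow A. (\<Prod>k\<in>T. x k) * of_int (z T))" by simp
  finally have "(of_real (\<Sum>T\<in>Pow A. (\<Prod>k\<in>T. x k) * of_int (z T)) :: complex) = 0" using actQ by simp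
  then have realeq: "(\<Sum>T\<in>Pow A. (\<Prod>k\<in>T. x k) * of_int (z T)) = 0" by (simp only: of_real_eq_0_iff)
  define ind where "ind T = (\<lambda>k. if k \<in> T then 1 else 0 :: nat)" for T :: "nat set"
  define S where "S = ind ` Pow A"
  define aa where "aa e = (of_int (z {k \<in> A. e k = 1}) :: rat)" for e :: "nat \<Rightarrow> nat"
  have inj: "inj_on ind (Pow A)"
  proof (rule inj_onI)
    fix T T' assume "ind T = ind T'"
    then have "\<forall>k. (k \<in> T) = (k \<in> T')" unfolding ind_def by (metis fun_eq_iff one_neq_zero)
    then show "T = T'" by blast
  qed
  have setT: "{k \<in> A. ind T k = 1} = T" if "T \<subseteq> A" for T using that by (auto simp: ind_def)
  have prodT: "(\<Prod>k\<in>A. x k ^ ind T k) = (\<Prod>k\<in>T. x k)" if "T \<subseteq> A" for T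
  proof -
    have "(\<Prod>k\<in>A. x k ^ ind T k) = (\<Prod>k\<in>A. if k \<in> T then x k else 1)"
      by (intro prod.cong) (auto simp: ind_def)
    also have "\<dots> = (\<Prod>k\<in>A \<inter> T. x k)" by (rule prod.inter_restrict[OF finA, symmetric])
    also have "A \<inter> T = T" using that by auto
    finally show ?thesis .
  qed
  have "(\<Sum>e\<in>S. of_rat (aa e) * (\<Prod>k\<in>{1..m}. x k ^ e k)) = (\<Sum>T\<in>Pow A. of_rat (aa (ind T)) * (\<Prod>k\<in>A. x k ^ ind T k))"
    unfolding S_def A_def[symmetric] by (rule sum.reindex[OF inj, unfolded comp_def])
  also have "\<dots> = (\<Sum>T\<in>Pow A. (\<Prod>k\<in>T. x k) * of_int (z T))"
  proof (intro sum.cong refl)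
    fix T assume "T \<in> Pow A"
    then have "T \<subseteq> A" by simp
    then show "of_rat (aa (ind T)) * (\<Prod>k\<in>A. x k ^ ind T k) = (\<Prod>k\<in>T. x k) * of_int (z T)"
      unfolding aa_def setT[OF \<open>T \<subseteq> A\<close>] prodT[OF \<open>T \<subseteq> A\<close>] by (simp add: of_rat_of_int_eq mult.commute)
  qed
  finally have sum0: "(\<Sum>e\<in>S. of_rat (aa e) * (\<Prod>k\<in>{1..m}. x k ^ e k)) = 0" using realeq by simp
  have "finite S" unfolding S_def using finA by simp
  moreover have "\<forall>e\<in>S. \<forall>k. k \<notin> {1..m} \<longrightarrow> e k = 0" unfolding S_def ind_def A_def by auto
  ultimately have "\<forall>e\<in>S. aa e = 0" using indep sum0 unfolding alg_indep_rat_def by blast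
  moreover have "ind A \<in> S" unfolding S_def by simp
  ultimately have "aa (ind A) = 0" by blast
  then have zA: "z A = 0" unfolding aa_def using setT[of A] by simp
  have "qT A = monom ((-2) ^ m) m" unfolding qT_def by (simp add: cardA monom_pow)
  then have "act N (qT A) Jc n = (\<Sum>i\<le>N. if m = i then (-2) ^ m * Jc (n + i) else 0)"
    unfolding act_def by (intro sum.cong refl) simp
  also have "\<dots> = (-2) ^ m * Jc (n + m)" by (simp add: N_def)
  finally have "act N (qT A) Jc n = (-2) ^ m * Jc (n + m)" .
  with z[of A] zA have "(-2) ^ m * Jc (n + m) = 0" by simp
  then show ?thesis by (simp add: Jc_def)
qed


lemma alg_part2:
  fixes a b u v :: "nat \<Rightarrow> complex" and p :: "nat \<Rightarrow> complex poly"
  assumes finA: "finite A" and k0: "k0 \<in> A"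
    and dist: "\<And>j. j \<in> A \<Longrightarrow> j \<noteq> k0 \<Longrightarrow> a k0 \<noteq> a j \<and> a k0 \<noteq> b j"
    and dist0: "a k0 \<noteq> b k0" "a k0 \<noteq> 0"
    and pz: "\<And>j z. j \<in> A \<Longrightarrow> poly (p j) z = (z - a j) * (z - b j)"
    and pd: "\<And>j. j \<in> A \<Longrightarrow> degree (p j) \<le> 2"
    and w0: "\<And>n. n \<ge> n0 \<Longrightarrow> (\<Sum>k\<in>A. u k * a k ^ n + v k * b k ^ n) = 0"
  shows "u k0 = 0"
proof -
  define R where "R = [:- b k0, 1:] * (\<Prod>j\<in>A - {k0}. p j)"
  define N where "N = 2 * card A"
  have degR: "degree R \<le> N"
  proof -
    have "degree R \<le> degree [:- b k0, 1:] + degree (\<Prod>j\<in>A - {k0}. p j)"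
      unfolding R_def by (rule degree_mult_le)
    also have "degree (\<Prod>j\<in>A - {k0}. p j) \<le> sum (degree \<circ> p) (A - {k0})"
      using finA by (intro degree_prod_sum_le) simp
    also have "\<dots> \<le> sum (\<lambda>_. 2) (A - {k0})" using pd by (intro sum_mono) simp
    also have "\<dots> = 2 * (card A - 1)" using finA k0 by simp
    finally show ?thesis unfolding N_def using k0 finA
      by (cases "card A") (auto simp: card_gt_0_iff)
  qed
  have "act N R (\<lambda>n. \<Sum>k\<in>A. u k * a k ^ n + v k * b k ^ n) n0 = 0"
    unfolding act_def using w0 by simp
  also have "act N R (\<lambda>n. \<Sum>k\<in>A. u k * a k ^ n + v k * b k ^ n) n0 =
     (\<Sum>k\<in>A. u k * poly R (a k) * a k ^ n0 + v k * poly R (b k) * b k ^ n0)"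
    by (rule act_expsum[OF degR finA])
  also have "\<dots> = (\<Sum>k\<in>A. if k = k0 then u k0 * poly R (a k0) * a k0 ^ n0 else 0)"
  proof (rule sum.cong[OF refl])
    fix k assume k: "k \<in> A"
    have pb: "poly R (b k) = 0"
    proof (cases "k = k0")
      case True then show ?thesis by (simp add: R_def)
    next
      case False
      then have "poly (\<Prod>j\<in>A - {k0}. p j) (b k) = 0"
        using k finA pz[of k] by (auto simp: poly_prod prod_zero_iff intro!: bexI[of _ k])
      then show ?thesis by (simp add: R_def)
    qed
    have pa: "poly R (a k) = 0" if "k \<noteq> k0"
    proof -
      have "poly (\<Prod>j\<in>A - {k0}. p j) (a k) = 0"
        using k that finA pz[of k] by (auto simp: poly_prod prod_zero_iff intro!: bexI[of _ k])
      then show ?thesis by (simp add: R_def)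
    qed
    show "u k * poly R (a k) * a k ^ n0 + v k * poly R (b k) * b k ^ n0 =
        (if k = k0 then u k0 * poly R (a k0) * a k0 ^ n0 else 0)"
      using pa pb by auto
  qed
  also have "\<dots> = u k0 * poly R (a k0) * a k0 ^ n0" using k0 finA by simp
  finally have eq: "u k0 * poly R (a k0) * a k0 ^ n0 = 0" by simp
  have "poly R (a k0) \<noteq> 0"
  proof -
    have "poly (\<Prod>j\<in>A - {k0}. p j) (a k0) \<noteq> 0"
      using finA dist pz by (auto simp: poly_prod prod_zero_iff)
    then show ?thesis using dist0 by (simp add: R_def)
  qed
  with eq dist0 show ?thesis by simp
qed



lemma circle_minus_fin: "finite F \<Longrightarrow> circleT - F \<in> sets borelT"
proof -
  assume "finite F"
  then have "open (- F)" by (simp add: finite_imp_closed open_Compl)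
  then have "- F \<in> sets borel" by simp
  moreover have "circleT - F = circleT \<inter> - F" by auto
  ultimately show ?thesis unfolding borelT_def sets_restrict_space by blast
qed

lemma hh2: "hh (n + 2) s - 2 * hh (n + 1) s + hh n s = s ^ n * (s - 1) ^ 2"
  by (simp add: hh_def algebra_simps power2_eq_square)

lemma alpha_facts:
  fixes t :: real
  defines "a \<equiv> exp (\<i> * of_real t)"
  shows "a = Complex (cos t) (sin t)" "cnj a = Complex (cos t) (- sin t)"
proof -
  show "a = Complex (cos t) (sin t)" unfolding a_def by (simp add: cis_conv_exp[symmetric] complex_eq_iff)
  then show "cnj a = Complex (cos t) (- sin t)" by (simp add: complex_eq_iff)
qed

lemma root_poly: "poly [:1, - 2 * of_real (cos t), 1:] (Complex (cos t) (sin t)) = 0"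
  "poly [:1, - 2 * of_real (cos t), 1:] (Complex (cos t) (- sin t)) = 0"
  using sin_cos_squared_add[of t]
  by (simp_all add: complex_eq_iff power2_eq_square algebra_simps)

lemma fact_poly: "poly [:1, - 2 * of_real (cos t), 1:] z = (z - Complex (cos t) (sin t)) * (z - Complex (cos t) (- sin t))"
  using sin_cos_squared_add[of t]
  by (simp add: complex_eq_iff power2_eq_square algebra_simps)



theorem theorem8p8:
  fixes m :: nat and \<phi> c d :: "nat \<Rightarrow> real"
  assumes "\<And>k. k \<in> {1..m} \<Longrightarrow> 0 < \<phi> k \<and> \<phi> k < pi"
    and "\<And>k. k \<in> {1..m} \<Longrightarrow> c k \<ge> 0 \<and> d k \<ge> 0"
    and "alg_indep_rat m (\<lambda>k. cos (\<phi> k))"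
  shows "L_unique (discrete_levy m (\<lambda>k. exp (\<i> * of_real (\<phi> k))) c d)"
proof -
  define A where "A = {1..m}"
  define \<alpha> where "\<alpha> k = exp (\<i> * of_real (\<phi> k))" for k
  define \<beta> where "\<beta> k = cnj (\<alpha> k)" for k
  define x where "x k = cos (\<phi> k)" for k
  define \<rho> where "\<rho> = discrete_levy m \<alpha> c d"
  have finA: "finite A" by (simp add: A_def)
  have phi: "0 < \<phi> k" "\<phi> k < pi" if "k \<in> A" for k using assms(1) that by (auto simp: A_def)
  have cd: "c k \<ge> 0" "d k \<ge> 0" if "k \<in> A" for k using assms(2) that by (auto simp: A_def)
  have indep: "alg_indep_rat m x" using assms(3) by (simp add: x_def[abs_def])
  have \<alpha>C: "\<alpha> k = Complex (x k) (sin (\<phi> k))" for k unfolding \<alpha>_def x_def by (rule alpha_facts)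
  have \<beta>C: "\<beta> k = Complex (x k) (- sin (\<phi> k))" for k unfolding \<beta>_def \<alpha>_def x_def by (rule alpha_facts)
  have sinpos: "sin (\<phi> k) > 0" if "k \<in> A" for k using phi[OF that] by (simp add: sin_gt_zero)
  have sc: "x k ^ 2 + sin (\<phi> k) ^ 2 = 1" for k unfolding x_def by (simp add: add.commute)
  have xlt1: "x k < 1" if "k \<in> A" for k
  proof -
    have "sin (\<phi> k) ^ 2 > 0" using sinpos[OF that] by simp
    then have "x k ^ 2 < 1" using sc[of k] by linarith
    then have "\<bar>x k\<bar> < 1" by (simp add: abs_square_less_1)
    then show ?thesis by simp
  qed
  have xdist: "x j \<noteq> x k" if "j \<in> A" "k \<in> A" "j \<noteq> k" for j k
  proof
    assume eq: "x j = x k"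
    define \<delta> where "\<delta> i = (\<lambda>l::nat. if l = i then 1 else 0 :: nat)" for i :: nat
    define S where "S = {\<delta> j, \<delta> k}"
    define a where "a e = (if e = \<delta> j then 1 else - 1 :: rat)" for e
    have ne: "\<delta> j \<noteq> \<delta> k" using that unfolding \<delta>_def by (metis one_neq_zero)
    have pr: "(\<Prod>l\<in>{1..m}. x l ^ \<delta> i l) = x i" if "i \<in> A" for i
    proof -
      have "(\<Prod>l\<in>{1..m}. x l ^ \<delta> i l) = (\<Prod>l\<in>{1..m}. if l = i then x l else 1)"
        by (intro prod.cong) (auto simp: \<delta>_def)
      also have "\<dots> = x i" using that by (simp add: A_def)
      finally show ?thesis .
    qed
    have "(\<Sum>e\<in>S. of_rat (a e) * (\<Prod>l\<in>{1..m}. x l ^ e l)) = x j - x k"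
      using ne pr[of j] pr[of k] that by (simp add: S_def a_def)
    then have "(\<Sum>e\<in>S. of_rat (a e) * (\<Prod>l\<in>{1..m}. x l ^ e l)) = 0" using eq by simp
    moreover have "\<forall>e\<in>S. \<forall>l. l \<notin> {1..m} \<longrightarrow> e l = 0" using that by (auto simp: S_def \<delta>_def A_def)
    moreover have "finite S" by (simp add: S_def)
    ultimately have "\<forall>e\<in>S. a e = 0" using indep unfolding alg_indep_rat_def by blast
    then show False by (simp add: S_def a_def)
  qed
  have Re\<alpha>[simp]: "Re (\<alpha> k) = x k" "Im (\<alpha> k) = sin (\<phi> k)" "Re (\<beta> k) = x k" "Im (\<beta> k) = - sin (\<phi> k)" for k
    by (simp_all add: \<alpha>C \<beta>C)
  have norm\<alpha>: "norm (\<alpha> k) = 1" "norm (\<beta> k) = 1" for k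
    using sc[of k] by (simp_all add: \<alpha>C \<beta>C cmod_def)
  have inT: "\<alpha> k \<in> circleT" "\<beta> k \<in> circleT" for k using norm\<alpha> by (simp_all add: circleT_iff)
  have \<alpha>inj: "\<alpha> j = \<alpha> k \<longleftrightarrow> j = k" "\<beta> j = \<beta> k \<longleftrightarrow> j = k" if "j \<in> A" "k \<in> A" for j k
    using xdist[OF that] by (auto simp: complex_eq_iff)
  have \<alpha>\<beta>: "\<alpha> j \<noteq> \<beta> k" if "j \<in> A" "k \<in> A" for j k
    using sinpos[OF that(1)] sinpos[OF that(2)] by (auto simp: complex_eq_iff)
  have \<beta>\<alpha>: "\<beta> j \<noteq> \<alpha> k" if "j \<in> A" "k \<in> A" for j k
    using \<alpha>\<beta>[OF that(2,1)] by metis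
  have \<alpha>1: "\<alpha> k \<noteq> 1" "\<beta> k \<noteq> 1" "\<alpha> k \<noteq> 0" if "k \<in> A" for k
    using sinpos[OF that] by (auto simp: complex_eq_iff)
  define F where "F = \<alpha> ` A \<union> \<beta> ` A"
  have finF: "finite F" using finA by (simp add: F_def)
  have FT: "F \<subseteq> circleT" using inT by (auto simp: F_def)
  have oneF: "1 \<notin> F" using \<alpha>1 by (auto simp: F_def)
  have sumF: "(\<Sum>a\<in>F. g a) = (\<Sum>k\<in>A. g (\<alpha> k) + g (\<beta> k))" for g :: "complex \<Rightarrow> 'z::comm_monoid_add"
  proof -
    have "(\<Sum>a\<in>F. g a) = (\<Sum>a\<in>\<alpha> ` A. g a) + (\<Sum>a\<in>\<beta> ` A. g a)"
      unfolding F_def using finA \<alpha>\<beta> by (intro sum.union_disjoint) auto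
    also have "(\<Sum>a\<in>\<alpha> ` A. g a) = (\<Sum>k\<in>A. g (\<alpha> k))"
      using \<alpha>inj by (intro sum.reindex_cong[of \<alpha>]) (auto intro!: inj_onI)
    also have "(\<Sum>a\<in>\<beta> ` A. g a) = (\<Sum>k\<in>A. g (\<beta> k))"
      using \<alpha>inj by (intro sum.reindex_cong[of \<beta>]) (auto intro!: inj_onI)
    finally show ?thesis by (simp add: sum.distrib)
  qed
  have singT: "{a} \<in> sets borelT" if "a \<in> F" for a using that FT singleton_borelT by blast
    have sets\<rho>: "sets \<rho> = sets borelT" by (simp add: \<rho>_def)
  have em\<rho>: "emeasure \<rho> B = (\<Sum>k\<in>A. ennreal (c k) * indicator B (\<alpha> k) + ennreal (d k) * indicator B (\<beta> k))"
    if "B \<in> sets borelT" for B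
    unfolding \<rho>_def A_def \<beta>_def by (rule dl_emeasure[OF that])
  have AE\<rho>: "AE s in \<rho>. s \<in> F"
  proof (rule AE_I')
    show "circleT - F \<in> null_sets \<rho>"
      using circle_minus_fin[OF finF] em\<rho>[of "circleT - F"] sets\<rho> by (auto simp: null_sets_def F_def)
    show "{s \<in> space \<rho>. s \<notin> F} \<subseteq> circleT - F" using space_T[OF sets\<rho>] by auto
  qed
  have pt\<rho>: "emeasure \<rho> {\<alpha> k} = ennreal (c k)" "emeasure \<rho> {\<beta> k} = ennreal (d k)" if "k \<in> A" for k
  proof -
    have "emeasure \<rho> {\<alpha> k} = (\<Sum>j\<in>A. if j = k then ennreal (c k) else 0)"
      unfolding em\<rho>[OF singleton_borelT[OF inT(1)]]
      using that \<alpha>inj \<alpha>\<beta> \<beta>\<alpha> by (intro sum.cong refl) (auto simp: indicator_def)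
    then show "emeasure \<rho> {\<alpha> k} = ennreal (c k)" using that finA by simp
    have "emeasure \<rho> {\<beta> k} = (\<Sum>j\<in>A. if j = k then ennreal (d k) else 0)"
      unfolding em\<rho>[OF singleton_borelT[OF inT(2)]]
      using that \<alpha>inj \<alpha>\<beta> \<beta>\<alpha> by (intro sum.cong refl) (auto simp: indicator_def)
    then show "emeasure \<rho> {\<beta> k} = ennreal (d k)" using that finA by simp
  qed
  have ptfin\<rho>: "emeasure \<rho> {a} < \<infinity>" if "a \<in> F" for a
    using that pt\<rho> by (auto simp: F_def)
  have int\<rho>: "integrable \<rho> f" "integral\<^sup>L \<rho> f = (\<Sum>k\<in>A. c k *\<^sub>R f (\<alpha> k) + d k *\<^sub>R f (\<beta> k))"
    if "f \<in> borel_measurable borel" for f :: "complex \<Rightarrow> 'z::{banach, second_countable_topology}"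
  proof -
    have fm: "f \<in> borel_measurable \<rho>" by (rule meas_T[OF sets\<rho> that])
    show "integrable \<rho> f" using fs_integral(1)[OF finF AE\<rho> _ ptfin\<rho> fm] singT sets\<rho> by simp
    have "integral\<^sup>L \<rho> f = (\<Sum>a\<in>F. measure \<rho> {a} *\<^sub>R f a)"
      using fs_integral(2)[OF finF AE\<rho> _ ptfin\<rho> fm] singT sets\<rho> by simp
    also have "\<dots> = (\<Sum>k\<in>A. c k *\<^sub>R f (\<alpha> k) + d k *\<^sub>R f (\<beta> k))"
      unfolding sumF using cd by (intro sum.cong refl) (simp add: measure_def pt\<rho>)
    finally show "integral\<^sup>L \<rho> f = (\<Sum>k\<in>A. c k *\<^sub>R f (\<alpha> k) + d k *\<^sub>R f (\<beta> k))" .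
  qed
  have levy\<rho>: "levy_measure \<rho>"
    unfolding levy_measure_def
  proof (intro conjI)
    show "sets \<rho> = sets borelT" by (fact sets\<rho>)
    have "1 \<in> circleT" by (simp add: circleT_iff)
    then show "emeasure \<rho> {1} = 0" using em\<rho>[OF singleton_borelT] \<alpha>1 by (auto simp: indicator_def intro!: sum.neutral)
    show "integrable \<rho> (\<lambda>s. 1 - Re s)" by (rule int\<rho>) simp
  qed
  have dl: "discrete_levy m (\<lambda>k. exp (\<i> * of_real (\<phi> k))) c d = \<rho>"
    unfolding \<rho>_def by (simp add: \<alpha>_def[abs_def])
  show ?thesis unfolding dl L_unique_def
  proof (intro allI impI, elim conjE)
    fix \<rho>' assume lev': "levy_measure \<rho>'" and coef: "\<forall>n. levy_coeff \<rho>' n = levy_coeff \<rho> n"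
    have sets': "sets \<rho>' = sets borelT" using lev' by (simp add: levy_measure_def)
    have space': "space \<rho>' = circleT" by (rule space_T[OF sets'])
    have expeq: "exp (integral\<^sup>L \<rho>' (hh n)) = exp (integral\<^sup>L \<rho> (hh n))" for n
      using coef[rule_format, of "int n"] by (simp add: levy_coeff_nat)
    have ReEq: "Re (integral\<^sup>L \<rho>' (hh n)) = Re (integral\<^sup>L \<rho> (hh n))" for n
    proof -
      have "norm (exp (integral\<^sup>L \<rho>' (hh n))) = norm (exp (integral\<^sup>L \<rho> (hh n)))" using expeq by simp
      then show ?thesis by simp
    qed
    have base: "(\<lambda>s. 1 - Re s) \<in> Vc"
    proof -
      have "(\<lambda>s. (Re s - 1) * (-1)) \<in> Vc" by (rule V_lin_mult[OF V_const])
      then show ?thesis by (rule V_cong) simp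
    qed
        define P where "P s = (1 - Re s) * (\<Prod>k\<in>A. (Re s - x k) ^ 2)" for s :: complex
    have PV: "P \<in> Vc" unfolding P_def[abs_def] using V_poly[OF finA base] .
    have P1: "P 1 = 0" by (simp add: P_def)
    have Pm: "P \<in> borel_measurable borel" unfolding P_def[abs_def] by measurable
    have Pint': "integrable \<rho>' P" and PintEq: "integral\<^sup>L \<rho>' P = integral\<^sup>L \<rho> P"
      using V_int[OF lev' levy\<rho> ReEq PV] P1 by simp_all
    have Pab: "P (\<alpha> k) = 0" "P (\<beta> k) = 0" if "k \<in> A" for k
      using that finA by (auto simp: P_def prod_zero_iff intro!: bexI[of _ k])
    have P\<rho>: "integral\<^sup>L \<rho> P = 0"
      using int\<rho>(2)[OF Pm] Pab by simp
    have Pnn: "AE s in \<rho>'. 0 \<le> P s"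
    proof (rule AE_I2)
      fix s assume "s \<in> space \<rho>'"
      then have "norm s = 1" using space' by (simp add: circleT_iff)
      then have "1 - Re s \<ge> 0" using abs_Re_le_cmod[of s] by simp
      then show "0 \<le> P s" unfolding P_def by (intro mult_nonneg_nonneg prod_nonneg) auto
    qed
    have AEP: "AE s in \<rho>'. P s = 0"
      using integral_nonneg_eq_0_iff_AE[OF Pint' Pnn] PintEq P\<rho> by simp
    have AE1: "AE s in \<rho>'. s \<noteq> 1"
    proof (rule AE_I')
      have "1 \<in> circleT" by (simp add: circleT_iff)
      then show "{1} \<in> null_sets \<rho>'" using lev' sets' singleton_borelT
        by (auto simp: levy_measure_def null_sets_def)
    qed auto
    have AEF: "AE s in \<rho>'. s \<in> F"
      using AEP AE1 AE_space[of \<rho>']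
    proof eventually_elim
      case (elim s)
      then have ns: "norm s = 1" using space' by (simp add: circleT_iff)
      then have sq: "Re s ^ 2 + Im s ^ 2 = 1" by (metis cmod_power2 one_power2)
      have "Re s \<noteq> 1"
      proof
        assume "Re s = 1"
        then have "Im s = 0" using sq by simp
        then show False using \<open>Re s = 1\<close> elim(2) by (simp add: complex_eq_iff)
      qed
      then have "(\<Prod>k\<in>A. (Re s - x k) ^ 2) = 0" using elim(1) by (simp add: P_def)
      then obtain k where k: "k \<in> A" "Re s = x k" using finA by (auto simp: prod_zero_iff)
      then have "Im s ^ 2 = sin (\<phi> k) ^ 2" using sq sc[of k] by simp
      then have "Im s = sin (\<phi> k) \<or> Im s = - sin (\<phi> k)" by (simp add: power2_eq_iff)
      then have "s = \<alpha> k \<or> s = \<beta> k" using k by (auto simp: complex_eq_iff)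
      then show "s \<in> F" using k by (auto simp: F_def)
    qed
    have ptfin': "emeasure \<rho>' {a} < \<infinity>" if "a \<in> F" for a
    proof -
      have "norm a = 1" "a \<noteq> 1" using that FT oneF by (auto simp: circleT_iff)
      have "Re a \<noteq> 1"
      proof
        assume "Re a = 1"
        moreover have "Re a ^ 2 + Im a ^ 2 = 1" using \<open>norm a = 1\<close> by (metis cmod_power2 one_power2)
        ultimately have "Im a = 0" by simp
        then show False using \<open>Re a = 1\<close> \<open>a \<noteq> 1\<close> by (simp add: complex_eq_iff)
      qed
      then have r: "1 - Re a > 0" using abs_Re_le_cmod[of a] \<open>norm a = 1\<close> by simp
      have sa: "{a} \<in> sets \<rho>'" using singT[OF that] sets' by simp
      have "ennreal (1 - Re a) * emeasure \<rho>' {a} = (\<integral>\<^sup>+s. ennreal (1 - Re a) * indicator {a} s \<partial>\<rho>')"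
        using sa by (simp add: nn_integral_cmult_indicator)
      also have "\<dots> \<le> (\<integral>\<^sup>+s. ennreal (1 - Re s) \<partial>\<rho>')"
        by (intro nn_integral_mono) (auto simp: indicator_def)
      also have "\<dots> < \<infinity>" using lev' unfolding levy_measure_def
        by (auto dest!: integrableD(2) simp: top.not_eq_extremum)
      finally show ?thesis using r by (auto simp: ennreal_mult_less_top)
    qed
    define c' where "c' k = measure \<rho>' {\<alpha> k}" for k
    define d' where "d' k = measure \<rho>' {\<beta> k}" for k
    have int': "integrable \<rho>' f" "integral\<^sup>L \<rho>' f = (\<Sum>k\<in>A. c' k *\<^sub>R f (\<alpha> k) + d' k *\<^sub>R f (\<beta> k))"
      if "f \<in> borel_measurable borel" for f :: "complex \<Rightarrow> 'z::{banach, second_countable_topology}"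
    proof -
      have fm: "f \<in> borel_measurable \<rho>'" by (rule meas_T[OF sets' that])
      show "integrable \<rho>' f" using fs_integral(1)[OF finF AEF _ ptfin' fm] singT sets' by simp
      have "integral\<^sup>L \<rho>' f = (\<Sum>a\<in>F. measure \<rho>' {a} *\<^sub>R f a)"
        using fs_integral(2)[OF finF AEF _ ptfin' fm] singT sets' by simp
      also have "\<dots> = (\<Sum>k\<in>A. c' k *\<^sub>R f (\<alpha> k) + d' k *\<^sub>R f (\<beta> k))"
        unfolding sumF c'_def d'_def ..
      finally show "integral\<^sup>L \<rho>' f = (\<Sum>k\<in>A. c' k *\<^sub>R f (\<alpha> k) + d' k *\<^sub>R f (\<beta> k))" .
    qed
    have em': "emeasure \<rho>' {\<alpha> k} = ennreal (c' k)" "emeasure \<rho>' {\<beta> k} = ennreal (d' k)" if "k \<in> A" for k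
      using ptfin'[of "\<alpha> k"] ptfin'[of "\<beta> k"] that unfolding c'_def d'_def
      by (auto simp: F_def emeasure_eq_ennreal_measure)
    have mass: "c' k0 + d' k0 = c k0 + d k0" if k0: "k0 \<in> A" for k0
    proof -
      define Q where "Q s = (1 - Re s) * (\<Prod>j\<in>A - {k0}. (Re s - x j) ^ 2)" for s :: complex
      have QV: "Q \<in> Vc" unfolding Q_def[abs_def] by (rule V_poly) (use finA base in auto)
      have Q1: "Q 1 = 0" by (simp add: Q_def)
      have Qm: "Q \<in> borel_measurable borel" unfolding Q_def[abs_def] by measurable
      have QEq: "integral\<^sup>L \<rho>' Q = integral\<^sup>L \<rho> Q"
        using V_int(2)[OF lev' levy\<rho> ReEq QV] Q1 by simp
      have Qv: "Q (\<alpha> j) = 0" "Q (\<beta> j) = 0" if "j \<in> A" "j \<noteq> k0" for j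
        using that finA by (auto simp: Q_def prod_zero_iff intro!: bexI[of _ j])
      have Qab: "Q (\<beta> k0) = Q (\<alpha> k0)" by (simp add: Q_def)
      have Qnz: "Q (\<alpha> k0) \<noteq> 0"
      proof -
        have "x k0 \<noteq> x j" if "j \<in> A" "j \<noteq> k0" for j using xdist[OF k0 that(1)] that by auto
        then show ?thesis using xlt1[OF k0] finA by (auto simp: Q_def prod_zero_iff)
      qed
      have gen: "(\<Sum>k\<in>A. p k *\<^sub>R Q (\<alpha> k) + q k *\<^sub>R Q (\<beta> k)) = (p k0 + q k0) * Q (\<alpha> k0)" for p q
      proof -
        have "(\<Sum>k\<in>A. p k *\<^sub>R Q (\<alpha> k) + q k *\<^sub>R Q (\<beta> k)) = (\<Sum>k\<in>A. if k = k0 then (p k0 + q k0) * Q (\<alpha> k0) else 0)"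
          using Qv Qab by (intro sum.cong refl) (auto simp: algebra_simps)
        also have "\<dots> = (p k0 + q k0) * Q (\<alpha> k0)" using k0 finA by simp
        finally show ?thesis .
      qed
      have "(c' k0 + d' k0) * Q (\<alpha> k0) = (c k0 + d k0) * Q (\<alpha> k0)"
        using QEq int'(2)[OF Qm] int\<rho>(2)[OF Qm] gen by simp
      then show ?thesis using Qnz by simp
    qed
    have psi': "integral\<^sup>L \<rho>' (hh n) = (\<Sum>k\<in>A. c' k *\<^sub>R hh n (\<alpha> k) + d' k *\<^sub>R hh n (\<beta> k))" for n
      by (rule int'(2)) simp
    have psi: "integral\<^sup>L \<rho> (hh n) = (\<Sum>k\<in>A. c k *\<^sub>R hh n (\<alpha> k) + d k *\<^sub>R hh n (\<beta> k))" for n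
      by (rule int\<rho>(2)) simp
    define e where "e k = c' k - c k" for k
    define Sg where "Sg n = (\<Sum>k\<in>A. of_real (e k) * (hh n (\<alpha> k) - hh n (\<beta> k)))" for n
    have G: "integral\<^sup>L \<rho>' (hh n) - integral\<^sup>L \<rho> (hh n) = Sg n" for n
    proof -
      have "integral\<^sup>L \<rho>' (hh n) - integral\<^sup>L \<rho> (hh n) =
         (\<Sum>k\<in>A. (c' k *\<^sub>R hh n (\<alpha> k) + d' k *\<^sub>R hh n (\<beta> k)) - (c k *\<^sub>R hh n (\<alpha> k) + d k *\<^sub>R hh n (\<beta> k)))"
        unfolding psi psi' by (simp add: sum_subtractf)
      also have "\<dots> = Sg n" unfolding Sg_def
      proof (intro sum.cong refl)
        fix k assume "k \<in> A"
        then have de: "d' k = d k - e k" using mass[of k] by (simp add: e_def)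
        have ce: "c' k = c k + e k" by (simp add: e_def)
        show "(c' k *\<^sub>R hh n (\<alpha> k) + d' k *\<^sub>R hh n (\<beta> k)) - (c k *\<^sub>R hh n (\<alpha> k) + d k *\<^sub>R hh n (\<beta> k)) =
            of_real (e k) * (hh n (\<alpha> k) - hh n (\<beta> k))"
          unfolding de ce scaleR_conv_of_real of_real_diff of_real_add by (simp add: algebra_simps)
      qed
      finally show ?thesis .
    qed
    have "\<forall>n. \<exists>K::int. Sg n = of_int (2 * K) * pi * \<i>"
    proof
      fix n
      obtain K :: int where "integral\<^sup>L \<rho>' (hh n) = integral\<^sup>L \<rho> (hh n) + of_int (2 * K) * pi * \<i>"
        using expeq[of n] exp_eq by blast
      then show "\<exists>K::int. Sg n = of_int (2 * K) * pi * \<i>" using G[of n] by (intro exI[of _ K]) simp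
    qed
    then obtain K :: "nat \<Rightarrow> int" where K: "\<And>n. Sg n = of_int (2 * K n) * pi * \<i>" by metis
    define u where "u k = of_real (e k) * (\<alpha> k - 1) ^ 2" for k
    define v where "v k = - of_real (e k) * (\<beta> k - 1) ^ 2" for k
    define J where "J n = K (n + 2) - 2 * K (n + 1) + K n" for n
    have w: "(\<Sum>k\<in>{1..m}. u k * \<alpha> k ^ n + v k * \<beta> k ^ n) = (2 * of_real pi * \<i>) * of_int (J n)" for n
    proof -
      define E where "E k = of_real (e k) * (hh (n + 2) (\<alpha> k) - hh (n + 2) (\<beta> k)) - 2 * (of_real (e k) * (hh (n + 1) (\<alpha> k) - hh (n + 1) (\<beta> k))) + of_real (e k) * (hh n (\<alpha> k) - hh n (\<beta> k))" for k
      have "(\<Sum>k\<in>A. u k * \<alpha> k ^ n + v k * \<beta> k ^ n) = (\<Sum>k\<in>A. E k)"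
      proof (intro sum.cong refl)
        fix k
        have "E k = of_real (e k) * (hh (n + 2) (\<alpha> k) - 2 * hh (n + 1) (\<alpha> k) + hh n (\<alpha> k)) - of_real (e k) * (hh (n + 2) (\<beta> k) - 2 * hh (n + 1) (\<beta> k) + hh n (\<beta> k))"
          unfolding E_def by (simp add: algebra_simps)
        also have "\<dots> = u k * \<alpha> k ^ n + v k * \<beta> k ^ n" unfolding hh2 u_def v_def by (simp add: algebra_simps)
        finally show "u k * \<alpha> k ^ n + v k * \<beta> k ^ n = E k" by simp
      qed
      also have "\<dots> = Sg (n + 2) - 2 * Sg (n + 1) + Sg n"
        unfolding Sg_def E_def by (simp add: sum_subtractf sum.distrib sum_distrib_left)
      also have "\<dots> = (2 * of_real pi * \<i>) * of_int (J n)" unfolding K J_def by (simp add: algebra_simps)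
      finally show ?thesis by (simp add: A_def)
    qed
    have roots: "poly [:1, - 2 * of_real (x k), 1:] (\<alpha> k) = 0 \<and> poly [:1, - 2 * of_real (x k), 1:] (\<beta> k) = 0" for k
      unfolding \<alpha>C \<beta>C x_def using root_poly by simp
    have J0: "J (n + m) = 0" for n
      by (rule alg_part[OF indep roots w]) simp
    have w0: "(\<Sum>k\<in>A. u k * \<alpha> k ^ n + v k * \<beta> k ^ n) = 0" if "n \<ge> m" for n
      using w[of n] J0[of "n - m"] that by (simp add: A_def)
    have e0: "e k0 = 0" if k0: "k0 \<in> A" for k0
    proof -
      have "u k0 = 0"
      proof (rule alg_part2[OF finA k0 _ _ _ _ _ w0])
        show "\<alpha> k0 \<noteq> \<alpha> j \<and> \<alpha> k0 \<noteq> \<beta> j" if "j \<in> A" "j \<noteq> k0" for j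
          using \<alpha>inj[OF that(1) k0] \<alpha>\<beta>[OF k0 that(1)] that by auto
        show "\<alpha> k0 \<noteq> \<beta> k0" "\<alpha> k0 \<noteq> 0" using \<alpha>\<beta>[OF k0 k0] \<alpha>1[OF k0] by auto
        show "poly [:1, - 2 * of_real (x j), 1:] z = (z - \<alpha> j) * (z - \<beta> j)" for j z
          unfolding \<alpha>C \<beta>C x_def by (rule fact_poly)
        show "degree [:1, - 2 * of_real (x j), 1:] \<le> 2" for j :: nat by simp
      qed
      then show ?thesis using \<alpha>1(1)[OF k0] by (simp add: u_def)
    qed
    have ptEq: "emeasure \<rho>' {a} = emeasure \<rho> {a}" if aF: "a \<in> F" for a
    proof -
      obtain k where k: "k \<in> A" "a = \<alpha> k \<or> a = \<beta> k" using aF by (auto simp: F_def)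
      have "c' k = c k" "d' k = d k" using e0[OF k(1)] mass[OF k(1)] by (simp_all add: e_def)
      then show ?thesis using k em'[OF k(1)] pt\<rho>[OF k(1)] by auto
    qed
    show "\<rho>' = \<rho>"
    proof (rule measure_eqI)
      show "sets \<rho>' = sets \<rho>" using sets' sets\<rho> by simp
      fix B assume B: "B \<in> sets \<rho>'"
      have "emeasure \<rho>' B = (\<Sum>a\<in>F. emeasure \<rho>' {a} * indicator B a)"
        by (rule fs_emeasure[OF finF AEF _ B]) (use singT sets' in auto)
      also have "\<dots> = (\<Sum>a\<in>F. emeasure \<rho> {a} * indicator B a)"
        using ptEq by (intro sum.cong refl) auto
      also have "\<dots> = emeasure \<rho> B"
        using B sets' sets\<rho> by (intro fs_emeasure[OF finF AE\<rho>, symmetric]) (use singT in auto)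
      finally show "emeasure \<rho>' B = emeasure \<rho> B" .
    qed
  qed
qed

end
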